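(* Let $\mathcal{M}$ be an episodic MDP with $H\ge5$ and deterministic expert $\pi^{\operatorname{E}}$, and let $\mathcal{D}$ be $m$ i.i.d. expert trajectories, randomly divided into disjoint $\mathcal{D}_1,\mathcal{D}_1^c$ with $|\mathcal{D}_1|=|\mathcal{D}_1^c|=m/2$. Fix $\pi'\in\Pi_{\mathrm{BC}}(\mathcal{D}_1)$ and let $\mathcal{D}'_{\mathrm{env}}$ be $n'$ trajectories collected by running $\pi'$ in $\mathcal{M}$. Fix $\varepsilon,\delta\in(0,1)$. Let $$\widetilde d_h(s,a)=\frac{1}{n'}\sum_{\operatorname{tr}\in\mathcal{D}'_{\mathrm{env}}}\mathbb{I}\{\operatorname{tr}_h(\cdot,\cdot)=(s,a),\operatorname{tr}_h\in\mathbf{Tr}_h^{\mathcal{D}_1}\}+\frac{2}{m}\sum_{\operatorname{tr}\in\mathcal{D}_1^c}\mathbb{I}\{\operatorname{tr}_h(\cdot,\cdot)=(s,a),\operatorname{tr}_h\notin\mathbf{Tr}_h^{\mathcal{D}_1}\}.$$ If $m\gtrsim\frac{H^{3/2}|\mathcal{S}|}{\varepsilon}\log\big(\frac{|\mathcal{S}|H}{\delta}\big)$ and $n'\gtrsim\frac{H^2|\mathcal{S}|}{\varepsilon^2}\log\big(\frac{|\mathcal{S}|H}{\delta}\big)$, then with probability at least $1-\delta$, $\sum_{h=1}^H\|\widetilde d_h-d_h^{\pi^{\operatorname{E}}}\|_1\le\varepsilon$.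
   Context: Episodic MDP $(\mathcal{S},\mathcal{A},P,r,H,\rho)$, finite $\mathcal{S},\mathcal{A}$; episodes $s_1\sim\rho$, $a_h\sim\pi_h(\cdot|s_h)$, $s_{h+1}\sim P_h(\cdot|s_h,a_h)$. A trajectory is $\operatorname{tr}=(s_1,a_1,\dots,s_H,a_H)$; $\operatorname{tr}_h=(s_1,a_1,\dots,s_h,a_h)$ and $\operatorname{tr}_h(\cdot,\cdot)=(s_h,a_h)$. $d_h^\pi(s,a)$ is the probability that $(s_h,a_h)=(s,a)$ under $\pi$. The expert $\pi^{\operatorname{E}}$ is deterministic with action $\pi^{\operatorname{E}}_h(s)$. For a set of trajectories $\mathcal{D}'$, $\mathcal{S}_h(\mathcal{D}')$ is the set of states appearing at step $h$ in $\mathcal{D}'$ and $\mathbf{Tr}_h^{\mathcal{D}'}=\{(s_1,a_1,\dots,s_h,a_h):s_\ell\in\mathcal{S}_\ell(\mathcal{D}')\ \forall\ell\le h\}$. $\Pi_{\mathrm{BC}}(\mathcal{D}_1)$ is the set of policies $\pi$ with $\pi_h(\pi^{\operatorname{E}}_h(s)|s)=1$ for all $h$ and all $s\in\mathcal{S}_h(\mathcal{D}_1)$. $a\gtrsim b$ means $a\ge Cb$ for a sufficiently large universal constant $C$. *)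

theory Defs
  imports "HOL-Probability.Probability"
begin

(* States and actions are natural numbers drawn from explicit finite carriers S and A.
   Steps are 0-based: step h in {0..<H} corresponds to step h+1 of the paper. *)

type_synonym traj = "(nat \<times> nat) list"
type_synonym policy = "nat \<Rightarrow> nat \<Rightarrow> nat pmf"
type_synonym transition = "nat \<Rightarrow> nat \<Rightarrow> nat \<Rightarrow> nat pmf"

definition valid_mdp :: "nat set \<Rightarrow> nat set \<Rightarrow> nat pmf \<Rightarrow> transition \<Rightarrow> bool" where
  "valid_mdp S A rho P \<longleftrightarrow> finite S \<and> S \<noteq> {} \<and> finite A \<and> A \<noteq> {} \<and>
     set_pmf rho \<subseteq> S \<and> (\<forall>h s a. s \<in> S \<longrightarrow> a \<in> A \<longrightarrow> set_pmf (P h s a) \<subseteq> S)"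

definition valid_policy :: "nat set \<Rightarrow> nat set \<Rightarrow> policy \<Rightarrow> bool" where
  "valid_policy S A \<pi> \<longleftrightarrow> (\<forall>h s. s \<in> S \<longrightarrow> set_pmf (\<pi> h s) \<subseteq> A)"

definition det_policy :: "(nat \<Rightarrow> nat \<Rightarrow> nat) \<Rightarrow> policy" where
  "det_policy f = (\<lambda>h s. return_pmf (f h s))"

fun traj_from :: "transition \<Rightarrow> policy \<Rightarrow> nat \<Rightarrow> nat \<Rightarrow> nat \<Rightarrow> traj pmf" where
  "traj_from P \<pi> h 0 s = return_pmf []"
| "traj_from P \<pi> h (Suc k) s =
     bind_pmf (\<pi> h s) (\<lambda>a. bind_pmf (P h s a) (\<lambda>s'.
       map_pmf (\<lambda>rest. (s, a) # rest) (traj_from P \<pi> (Suc h) k s')))"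

definition traj_pmf :: "nat pmf \<Rightarrow> transition \<Rightarrow> policy \<Rightarrow> nat \<Rightarrow> traj pmf" where
  "traj_pmf rho P \<pi> H = bind_pmf rho (traj_from P \<pi> 0 H)"

definition occ :: "nat pmf \<Rightarrow> transition \<Rightarrow> policy \<Rightarrow> nat \<Rightarrow> nat \<Rightarrow> nat \<times> nat \<Rightarrow> real" where
  "occ rho P \<pi> H h sa = pmf (map_pmf (\<lambda>tr. tr ! h) (traj_pmf rho P \<pi> H)) sa"

fun iid_list :: "'b pmf \<Rightarrow> nat \<Rightarrow> 'b list pmf" where
  "iid_list p 0 = return_pmf []"
| "iid_list p (Suc n) = bind_pmf p (\<lambda>x. map_pmf (\<lambda>xs. x # xs) (iid_list p n))"

definition states_at :: "nat \<Rightarrow> traj list \<Rightarrow> nat set" where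
  "states_at h D' = {fst (tr ! h) | tr. tr \<in> set D'}"

definition in_Tr :: "nat \<Rightarrow> traj list \<Rightarrow> traj \<Rightarrow> bool" where
  "in_Tr h D' tr \<longleftrightarrow> (\<forall>l\<le>h. fst (tr ! l) \<in> states_at l D')"

definition in_Pi_BC :: "nat \<Rightarrow> (nat \<Rightarrow> nat \<Rightarrow> nat) \<Rightarrow> traj list \<Rightarrow> policy \<Rightarrow> bool" where
  "in_Pi_BC H piE D1 \<pi> \<longleftrightarrow>
     (\<forall>h<H. \<forall>s\<in>states_at h D1. pmf (\<pi> h s) (piE h s) = 1)"

definition d_tilde :: "nat \<Rightarrow> nat \<Rightarrow> traj list \<Rightarrow> traj list \<Rightarrow> traj list \<Rightarrow> nat \<Rightarrow> nat \<times> nat \<Rightarrow> real" where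
  "d_tilde m n' D1 D1c Denv h sa =
     (1 / real n') * (\<Sum>tr\<leftarrow>Denv. if tr ! h = sa \<and> in_Tr h D1 tr then 1 else 0)
   + (2 / real m) * (\<Sum>tr\<leftarrow>D1c. if tr ! h = sa \<and> \<not> in_Tr h D1 tr then 1 else 0)"

definition bc_experiment :: "nat pmf \<Rightarrow> transition \<Rightarrow> (nat \<Rightarrow> nat \<Rightarrow> nat) \<Rightarrow> nat \<Rightarrow>
    (traj list \<Rightarrow> policy) \<Rightarrow> nat \<Rightarrow> nat \<Rightarrow> (traj list \<times> traj list \<times> traj list) pmf" where
  "bc_experiment rho P piE H sel m n' =
     bind_pmf (iid_list (traj_pmf rho P (det_policy piE) H) m) (\<lambda>D.
     bind_pmf (pmf_of_set {I. I \<subseteq> {..<m} \<and> card I = m div 2}) (\<lambda>I.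
       let D1 = map (\<lambda>i. D ! i) (filter (\<lambda>i. i \<in> I) [0..<m]);
           D1c = map (\<lambda>i. D ! i) (filter (\<lambda>i. i \<notin> I) [0..<m])
       in map_pmf (\<lambda>Denv. (D1, D1c, Denv)) (iid_list (traj_pmf rho P (sel D1) H) n')))"

end

theory Submission
  imports Defs
begin

lemma prob_bind_le:
  assumes "\<And>x. x \<in> set_pmf M \<Longrightarrow> measure_pmf.prob (N x) X \<le> c"
  shows "measure_pmf.prob (bind_pmf M N) X \<le> c"
proof -
  obtain x0 where x0: "x0 \<in> set_pmf M" using set_pmf_not_empty[of M] by blast
  have c0: "0 \<le> c" using assms[OF x0] measure_nonneg order_trans by blast
  have "emeasure (bind_pmf M N) X = (\<integral>\<^sup>+x. emeasure (N x) X \<partial>M)" by simp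
  also have "\<dots> \<le> (\<integral>\<^sup>+x. ennreal c \<partial>M)"
    apply (rule nn_integral_mono_AE)
    using assms by (auto simp: AE_measure_pmf_iff measure_pmf.emeasure_eq_measure intro!: ennreal_leI)
  also have "\<dots> = ennreal c" by simp
  finally show ?thesis using c0 by (simp add: measure_pmf.emeasure_eq_measure)
qed

lemma iid_list_replicate: "iid_list p n = replicate_pmf n p"
  by (induction n) (auto simp: map_pmf_def)

lemma replicate_map_pmf: "replicate_pmf n (map_pmf f p) = map_pmf (map f) (replicate_pmf n p)"
  by (induction n) (auto simp: map_pmf_def bind_assoc_pmf bind_return_pmf)

lemma map_bernoulli: "map_pmf E p = bernoulli_pmf (measure_pmf.prob p {x. E x})"
proof (rule pmf_eqI)
  fix b show "pmf (map_pmf E p) b = pmf (bernoulli_pmf (measure_pmf.prob p {x. E x})) b"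
  proof (cases b)
    case True then show ?thesis by (simp add: pmf_map vimage_def)
  next
    case False
    have "measure_pmf.prob p {x. \<not> E x} = 1 - measure_pmf.prob p {x. E x}"
      using measure_pmf.prob_compl[of "{x. E x}" p] by (simp add: Compl_eq_Diff_UNIV[symmetric] Collect_neg_eq)
    then show ?thesis using False by (simp add: pmf_map vimage_def)
  qed
qed

lemma binomial_iid:
  "map_pmf (\<lambda>xs. length (filter E xs)) (iid_list p n) = binomial_pmf n (measure_pmf.prob p {x. E x})"
proof -
  have "binomial_pmf n (measure_pmf.prob p {x. E x}) = map_pmf (length \<circ> filter id) (replicate_pmf n (map_pmf E p))"
    by (subst binomial_pmf_altdef) (auto simp: map_bernoulli)
  also have "\<dots> = map_pmf (\<lambda>xs. length (filter E xs)) (iid_list p n)"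
    by (simp add: replicate_map_pmf iid_list_replicate pmf.map_comp o_def filter_map)
  finally show ?thesis by simp
qed

lemma exp_le_quad:
  fixes t :: real assumes "\<bar>t\<bar> \<le> 1" shows "exp t \<le> 1 + t + t\<^sup>2"
proof (cases "t \<ge> 0")
  case True then show ?thesis using exp_bound[of t] assms by simp
next
  case False
  define u where "u = -t"
  have u: "0 \<le> u" "u \<le> 1" using False assms u_def by auto
  have "exp t = 1 / exp u" by (simp add: u_def exp_minus field_simps)
  also have "\<dots> \<le> 1 / (1 + u)"
    using u by (intro divide_left_mono) (auto simp: add_pos_nonneg)
  also have "\<dots> \<le> 1 - u + u\<^sup>2"
  proof -
    have "1 \<le> (1 - u + u\<^sup>2) * (1 + u)" using u by (simp add: algebra_simps power2_eq_square power3_eq_cube)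
    then show ?thesis using u by (simp add: field_simps)
  qed
  finally show ?thesis by (simp add: u_def)
qed

lemma binom_mgf:
  "(\<Sum>k\<le>n. pmf (binomial_pmf n q) k * exp (t * real k)) = (q * exp t + (1 - q)) ^ n"
  if "q \<in> {0..1}"
proof -
  have "(q * exp t + (1 - q)) ^ n = (\<Sum>k\<le>n. of_nat (n choose k) * (q * exp t) ^ k * (1 - q) ^ (n - k))"
    by (rule binomial_ring)
  also have "\<dots> = (\<Sum>k\<le>n. pmf (binomial_pmf n q) k * exp (t * real k))"
    using that by (intro sum.cong refl) (simp add: power_mult_distrib exp_of_nat_mult[symmetric] mult.commute mult.left_commute)
  finally show ?thesis by simp
qed

lemma binom_markov:
  assumes q: "q \<in> {0..1}"
  shows "measure_pmf.prob (binomial_pmf n q) {k. b \<le> t * real k} \<le> exp (-b) * (q * exp t + (1 - q)) ^ n"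
proof -
  let ?A = "{k. b \<le> t * real k}"
  have "measure_pmf.prob (binomial_pmf n q) ?A = measure_pmf.prob (binomial_pmf n q) (?A \<inter> {..n})"
    using q by (intro measure_prob_cong_0) (auto simp: binomial_eq_0)
  also have "\<dots> = sum (pmf (binomial_pmf n q)) (?A \<inter> {..n})"
    by (rule measure_measure_pmf_finite) auto
  also have "\<dots> \<le> (\<Sum>k\<le>n. pmf (binomial_pmf n q) k * exp (t * real k - b))"
  proof -
    have "sum (pmf (binomial_pmf n q)) (?A \<inter> {..n}) \<le> (\<Sum>k\<in>?A \<inter> {..n}. pmf (binomial_pmf n q) k * exp (t * real k - b))"
    proof (intro sum_mono)
      fix k assume "k \<in> ?A \<inter> {..n}"
      then have "1 \<le> exp (t * real k - b)" by simp
      then show "pmf (binomial_pmf n q) k \<le> pmf (binomial_pmf n q) k * exp (t * real k - b)"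
        using mult_left_mono[of 1 "exp (t * real k - b)" "pmf (binomial_pmf n q) k"] by simp
    qed
    also have "\<dots> \<le> (\<Sum>k\<le>n. pmf (binomial_pmf n q) k * exp (t * real k - b))"
      by (intro sum_mono2) auto
    finally show ?thesis .
  qed
  also have "\<dots> = exp (-b) * (\<Sum>k\<le>n. pmf (binomial_pmf n q) k * exp (t * real k))"
    by (simp add: sum_distrib_left exp_diff exp_minus field_simps)
  also have "\<dots> = exp (-b) * (q * exp t + (1 - q)) ^ n" using binom_mgf[OF q] by simp
  finally show ?thesis .
qed

lemma binom_chernoff:
  assumes q: "q \<in> {0..1}" and t: "\<bar>t\<bar> \<le> 1"
  shows "measure_pmf.prob (binomial_pmf n q) {k. b \<le> t * real k} \<le> exp (-b + real n * q * (t + t\<^sup>2))"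
proof -
  have "(q * exp t + (1 - q)) ^ n \<le> exp (q * (exp t - 1)) ^ n"
  proof (rule power_mono)
    show "q * exp t + (1 - q) \<le> exp (q * (exp t - 1))"
      using exp_ge_add_one_self[of "q * (exp t - 1)"] by (simp add: algebra_simps)
    show "0 \<le> q * exp t + (1 - q)" using q by (simp add: add_nonneg_nonneg)
  qed
  also have "\<dots> = exp (real n * q * (exp t - 1))" by (simp add: exp_of_nat_mult[symmetric] mult.assoc)
  also have "\<dots> \<le> exp (real n * q * (t + t\<^sup>2))"
    using exp_le_quad[OF t] q by (auto intro!: mult_left_mono)
  finally have "exp (-b) * (q * exp t + (1 - q)) ^ n \<le> exp (-b) * exp (real n * q * (t + t\<^sup>2))"
    by (simp)
  with binom_markov[OF q, where b=b and t=t and n=n] show ?thesis by (simp add: exp_add[symmetric])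
qed

lemma sqrt_aux: assumes "0 < \<mu>" "0 \<le> L" shows "sqrt (L / \<mu>) * sqrt (\<mu> * L) = L" "(sqrt (L / \<mu>))\<^sup>2 = L / \<mu>"
proof -
  have "sqrt (L / \<mu>) * sqrt (\<mu> * L) = sqrt (L * L)" using assms by (simp add: real_sqrt_mult[symmetric])
  then show "sqrt (L / \<mu>) * sqrt (\<mu> * L) = L" using assms by simp
  show "(sqrt (L / \<mu>))\<^sup>2 = L / \<mu>" using assms by simp
qed

lemma binom_upper:
  assumes q: "q \<in> {0..1}" and L: "0 \<le> L"
  shows "measure_pmf.prob (binomial_pmf n q)
           {k. real n * q + 2 * sqrt (real n * q * L) + 2 * L \<le> real k} \<le> exp (-L)"
proof -
  define \<mu> where "\<mu> = real n * q"
  define x where "x = 2 * sqrt (\<mu> * L) + 2 * L"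
  have \<mu>0: "0 \<le> \<mu>" using q by (simp add: \<mu>_def)
  have x0: "0 \<le> x" using L \<mu>0 by (simp add: x_def)
  show ?thesis
  proof (cases "\<mu> \<le> L")
    case True
    have "measure_pmf.prob (binomial_pmf n q) {k. \<mu> + x \<le> real k}
        \<le> exp (- (\<mu> + x) + real n * q * (1 + 1\<^sup>2))"
      using binom_chernoff[OF q, of 1 n "\<mu> + x"] by simp
    also have "\<dots> \<le> exp (-L)"
    proof -
      have sq: "0 \<le> sqrt (\<mu> * L)" using L \<mu>0 by simp
      have "- (\<mu> + x) + \<mu> * 2 \<le> -L" using True sq unfolding x_def by linarith
      then show ?thesis by (simp add: \<mu>_def[symmetric])
    qed
    finally show ?thesis by (simp add: \<mu>_def x_def add.assoc)
  next
    case False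
    then have \<mu>pos: "0 < \<mu>" using L by simp
    define t where "t = sqrt (L / \<mu>)"
    have t0: "0 \<le> t" using L \<mu>pos by (simp add: t_def)
    have t1: "t \<le> 1" using False \<mu>pos by (simp add: t_def)
    have tm: "t * sqrt (\<mu> * L) = L" and t2: "t\<^sup>2 = L / \<mu>" using sqrt_aux[OF \<mu>pos L] by (simp_all add: t_def)
    have sub: "{k. \<mu> + x \<le> real k} \<subseteq> {k. t * (\<mu> + x) \<le> t * real k}"
      using t0 by (auto intro: mult_left_mono)
    have "measure_pmf.prob (binomial_pmf n q) {k. \<mu> + x \<le> real k}
        \<le> measure_pmf.prob (binomial_pmf n q) {k. t * (\<mu> + x) \<le> t * real k}"
      by (rule measure_pmf.finite_measure_mono[OF sub]) simp
    also have "\<dots> \<le> exp (- (t * (\<mu> + x)) + \<mu> * (t + t\<^sup>2))"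
      using binom_chernoff[OF q, of t n "t * (\<mu> + x)"] t0 t1 by (simp add: \<mu>_def)
    also have "- (t * (\<mu> + x)) + \<mu> * (t + t\<^sup>2) = - 2 * L - 2 * t * L + L"
      using tm t2 \<mu>pos by (simp add: x_def algebra_simps)
    also have "exp (- 2 * L - 2 * t * L + L) \<le> exp (-L)" using t0 L by simp
    finally show ?thesis by (simp add: \<mu>_def x_def add.assoc)
  qed
qed

lemma binom_lower:
  assumes q: "q \<in> {0..1}" and L: "0 \<le> L"
  shows "measure_pmf.prob (binomial_pmf n q)
           {k. real k \<le> real n * q - 2 * sqrt (real n * q * L) - 2 * L} \<le> exp (-L)"
proof -
  define \<mu> where "\<mu> = real n * q"
  define x where "x = 2 * sqrt (\<mu> * L) + 2 * L"
  have \<mu>0: "0 \<le> \<mu>" using q by (simp add: \<mu>_def)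
  have x0: "0 \<le> x" using L \<mu>0 by (simp add: x_def)
  have eq: "{k. real k \<le> real n * q - 2 * sqrt (real n * q * L) - 2 * L} = {k. real k \<le> \<mu> - x}"
    by (simp add: \<mu>_def x_def algebra_simps)
  show ?thesis unfolding eq
  proof (cases "\<mu> \<le> L")
    case True
    have sub: "{k. real k \<le> \<mu> - x} \<subseteq> {k. - (\<mu> - x) \<le> (-1) * real k}" by auto
    have "measure_pmf.prob (binomial_pmf n q) {k. real k \<le> \<mu> - x}
        \<le> measure_pmf.prob (binomial_pmf n q) {k. - (\<mu> - x) \<le> (-1) * real k}"
      by (rule measure_pmf.finite_measure_mono[OF sub]) simp
    also have "\<dots> \<le> exp (- (- (\<mu> - x)) + real n * q * ((-1) + (-1)\<^sup>2))"
      using binom_chernoff[OF q, of "-1" n "- (\<mu> - x)"] by simp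
    also have "\<dots> \<le> exp (-L)"
    proof -
      have sq: "0 \<le> sqrt (\<mu> * L)" using L \<mu>0 by simp
      have "(\<mu> - x) \<le> -L" using True sq unfolding x_def by linarith
      then show ?thesis by (simp add: \<mu>_def[symmetric])
    qed
    finally show "measure_pmf.prob (binomial_pmf n q) {k. real k \<le> \<mu> - x} \<le> exp (-L)" .
  next
    case False
    then have \<mu>pos: "0 < \<mu>" using L by simp
    define t where "t = sqrt (L / \<mu>)"
    have t0: "0 \<le> t" using L \<mu>pos by (simp add: t_def)
    have t1: "t \<le> 1" using False \<mu>pos by (simp add: t_def)
    have tm: "t * sqrt (\<mu> * L) = L" and t2: "t\<^sup>2 = L / \<mu>" using sqrt_aux[OF \<mu>pos L] by (simp_all add: t_def)
    have sub: "{k. real k \<le> \<mu> - x} \<subseteq> {k. (-t) * (\<mu> - x) \<le> (-t) * real k}"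
      using t0 by (auto intro: mult_left_mono)
    have "measure_pmf.prob (binomial_pmf n q) {k. real k \<le> \<mu> - x}
        \<le> measure_pmf.prob (binomial_pmf n q) {k. (-t) * (\<mu> - x) \<le> (-t) * real k}"
      by (rule measure_pmf.finite_measure_mono[OF sub]) simp
    also have "\<dots> \<le> exp (- ((-t) * (\<mu> - x)) + \<mu> * ((-t) + (-t)\<^sup>2))"
      using binom_chernoff[OF q, of "-t" n "(-t) * (\<mu> - x)"] t0 t1 by (simp add: \<mu>_def)
    also have "- ((-t) * (\<mu> - x)) + \<mu> * ((-t) + (-t)\<^sup>2) = - 2 * L - 2 * t * L + L"
      using tm t2 \<mu>pos by (simp add: x_def algebra_simps)
    also have "exp (- 2 * L - 2 * t * L + L) \<le> exp (-L)" using t0 L by simp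
    finally show "measure_pmf.prob (binomial_pmf n q) {k. real k \<le> \<mu> - x} \<le> exp (-L)" .
  qed
qed

lemma binom_dev:
  assumes q: "q \<in> {0..1}" and L: "0 \<le> L"
  shows "measure_pmf.prob (binomial_pmf n q)
           {k. 2 * sqrt (real n * q * L) + 2 * L < \<bar>real k - real n * q\<bar>} \<le> 2 * exp (-L)"
proof -
  let ?U = "{k. real n * q + 2 * sqrt (real n * q * L) + 2 * L \<le> real k}"
  let ?D = "{k. real k \<le> real n * q - 2 * sqrt (real n * q * L) - 2 * L}"
  have "measure_pmf.prob (binomial_pmf n q) {k. 2 * sqrt (real n * q * L) + 2 * L < \<bar>real k - real n * q\<bar>}
      \<le> measure_pmf.prob (binomial_pmf n q) (?U \<union> ?D)"
    by (rule measure_pmf.finite_measure_mono) auto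
  also have "\<dots> \<le> measure_pmf.prob (binomial_pmf n q) ?U + measure_pmf.prob (binomial_pmf n q) ?D"
    by (rule measure_Un_le) auto
  also have "\<dots> \<le> 2 * exp (-L)" using binom_upper[OF q L, of n] binom_lower[OF q L, of n] by simp
  finally show ?thesis .
qed

lemma iid_dev:
  assumes L: "0 \<le> L"
  shows "measure_pmf.prob (iid_list p n)
      {xs. 2 * sqrt (real n * measure_pmf.prob p {x. E x} * L) + 2 * L
           < \<bar>real (length (filter E xs)) - real n * measure_pmf.prob p {x. E x}\<bar>} \<le> 2 * exp (-L)"
proof -
  let ?q = "measure_pmf.prob p {x. E x}"
  have q: "?q \<in> {0..1}" by simp
  have "measure_pmf.prob (iid_list p n)
      {xs. 2 * sqrt (real n * ?q * L) + 2 * L < \<bar>real (length (filter E xs)) - real n * ?q\<bar>}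
     = measure_pmf.prob (map_pmf (\<lambda>xs. length (filter E xs)) (iid_list p n))
        {k. 2 * sqrt (real n * ?q * L) + 2 * L < \<bar>real k - real n * ?q\<bar>}"
    by (simp add: vimage_def)
  also have "\<dots> \<le> 2 * exp (-L)" unfolding binomial_iid by (rule binom_dev[OF q L])
  finally show ?thesis .
qed

lemma iid_none:
  "measure_pmf.prob (iid_list p n) {xs. \<not> (\<exists>x\<in>set xs. E x)} \<le> exp (- real n * measure_pmf.prob p {x. E x})"
proof -
  let ?q = "measure_pmf.prob p {x. E x}"
  have q: "?q \<in> {0..1}" by simp
  have "measure_pmf.prob (iid_list p n) {xs. \<not> (\<exists>x\<in>set xs. E x)}
     = measure_pmf.prob (map_pmf (\<lambda>xs. length (filter E xs)) (iid_list p n)) {0}"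
    by (simp add: vimage_def filter_empty_conv)
  also have "\<dots> = (1 - ?q) ^ n" unfolding binomial_iid using q by (simp add: measure_pmf_single)
  also have "\<dots> \<le> exp (- ?q) ^ n"
    using q by (intro power_mono) (auto simp: exp_ge_add_one_self[of "- ?q", simplified])
  also have "\<dots> = exp (- real n * ?q)" by (simp add: exp_of_nat_mult[symmetric])
  finally show ?thesis .
qed

lemma traj_from_set:
  "tr \<in> set_pmf (traj_from P \<pi> j k s) \<Longrightarrow> length tr = k \<and> (\<forall>i<k. snd (tr ! i) \<in> set_pmf (\<pi> (j + i) (fst (tr ! i))))"
proof (induction k arbitrary: j s tr)
  case 0 then show ?case by simp
next
  case (Suc k)
  from Suc.prems obtain a s' rest where a: "a \<in> set_pmf (\<pi> j s)" and
    rest: "rest \<in> set_pmf (traj_from P \<pi> (Suc j) k s')" and tr: "tr = (s, a) # rest"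
    by auto
  from Suc.IH[OF rest] have IH: "length rest = k" "\<forall>i<k. snd (rest ! i) \<in> set_pmf (\<pi> (Suc j + i) (fst (rest ! i)))"
    by auto
  show ?case
  proof (intro conjI allI impI)
    show "length tr = Suc k" using IH tr by simp
    fix i assume "i < Suc k"
    then show "snd (tr ! i) \<in> set_pmf (\<pi> (j + i) (fst (tr ! i)))"
      using IH a tr by (cases i) auto
  qed
qed

definition cut :: "(nat \<Rightarrow> nat set) \<Rightarrow> nat \<Rightarrow> nat \<Rightarrow> traj \<Rightarrow> (nat \<times> nat) option" where
  "cut G j i tr = (if \<forall>l\<le>i. fst (tr ! l) \<in> G (j + l) then Some (tr ! i) else None)"

lemma cut_Cons_Suc: "cut G j (Suc i) (x # tr) = (if fst x \<in> G j then cut G (Suc j) i tr else None)"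
proof -
  have "(\<forall>l\<le>Suc i. fst ((x # tr) ! l) \<in> G (j + l)) \<longleftrightarrow> fst x \<in> G j \<and> (\<forall>l\<le>i. fst (tr ! l) \<in> G (Suc j + l))"
    (is "?A \<longleftrightarrow> ?B")
  proof
    assume ?A then show ?B by (auto dest: spec[of _ 0] spec[of _ "Suc _"])
  next
    assume B: ?B show ?A
    proof (intro allI impI)
      fix l assume "l \<le> Suc i" then show "fst ((x # tr) ! l) \<in> G (j + l)" using B by (cases l) auto
    qed
  qed
  then show ?thesis unfolding cut_def by auto
qed

lemma cut_Cons_0: "cut G j 0 (x # tr) = (if fst x \<in> G j then Some x else None)"
  by (simp add: cut_def)

lemma coupling:
  assumes agree: "\<And>l t. t \<in> G l \<Longrightarrow> \<pi> l t = \<pi>' l t"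
  shows "i < k \<Longrightarrow> map_pmf (cut G j i) (traj_from P \<pi> j k s) = map_pmf (cut G j i) (traj_from P \<pi>' j k s)"
proof (induction k arbitrary: i j s)
  case 0 then show ?case by simp
next
  case (Suc k)
  show ?case
  proof (cases "s \<in> G j")
    case False
    have "map_pmf (cut G j i) (traj_from P \<rho> j (Suc k) s) = return_pmf None" for \<rho>
    proof -
      have "map_pmf (cut G j i) (traj_from P \<rho> j (Suc k) s)
          = bind_pmf (\<rho> j s) (\<lambda>a. bind_pmf (P j s a) (\<lambda>s'. map_pmf (\<lambda>_. None) (traj_from P \<rho> (Suc j) k s')))"
        using False by (cases i) (simp_all add: map_bind_pmf pmf.map_comp o_def cut_Cons_0 cut_Cons_Suc)
      also have "\<dots> = return_pmf None" by (simp add: map_pmf_const)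
      finally show ?thesis .
    qed
    then show ?thesis by simp
  next
    case True
    have eq: "\<pi> j s = \<pi>' j s" using agree[OF True] .
    show ?thesis
    proof (cases i)
      case 0
      then show ?thesis using True eq
        by (simp add: map_bind_pmf pmf.map_comp o_def cut_Cons_0 map_pmf_const)
    next
      case (Suc i')
      then have "i' < k" using Suc.prems by simp
      then show ?thesis using True eq Suc.IH
        by (simp add: map_bind_pmf pmf.map_comp o_def cut_Cons_Suc Suc)
    qed
  qed
qed

definition selp :: "(nat \<Rightarrow> bool) \<Rightarrow> nat \<Rightarrow> 'b list \<Rightarrow> 'b list" where
  "selp Q n D = map (\<lambda>i. D ! i) (filter Q [0..<n])"

lemma selp_Suc: "selp Q (Suc n) (x # xs) = (if Q 0 then x # selp (Q \<circ> Suc) n xs else selp (Q \<circ> Suc) n xs)"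
proof -
  have "[0..<Suc n] = 0 # map Suc [0..<n]" by (simp add: map_Suc_upt upt_conv_Cons)
  then show ?thesis by (simp add: selp_def filter_map o_def)
qed

lemma len_filter_Suc: "length (filter Q [0..<Suc n]) = (if Q 0 then 1 else 0) + length (filter (Q \<circ> Suc) [0..<n])"
proof -
  have "[0..<Suc n] = 0 # map Suc [0..<n]" by (simp add: map_Suc_upt upt_conv_Cons)
  then show ?thesis by (simp add: filter_map)
qed

lemma split_iid:
  "map_pmf (\<lambda>D. (selp Q n D, selp (\<lambda>i. \<not> Q i) n D)) (iid_list p n)
   = pair_pmf (iid_list p (length (filter Q [0..<n]))) (iid_list p (length (filter (\<lambda>i. \<not> Q i) [0..<n])))"
proof (induction n arbitrary: Q)
  case 0 then show ?case by (simp add: selp_def pair_return_pmf1)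
next
  case (Suc n)
  note IH = Suc.IH[of "Q \<circ> Suc"]
  have neg: "(\<lambda>i. \<not> Q i) \<circ> Suc = (\<lambda>i. \<not> (Q \<circ> Suc) i)" by auto
  show ?case
  proof (cases "Q 0")
    case True
    have A: "map_pmf (\<lambda>D. (selp Q (Suc n) D, selp (\<lambda>i. \<not> Q i) (Suc n) D)) (iid_list p (Suc n))
        = bind_pmf p (\<lambda>x. map_pmf (\<lambda>(a, b). (x # a, b))
            (map_pmf (\<lambda>D. (selp (Q \<circ> Suc) n D, selp (\<lambda>i. \<not> (Q \<circ> Suc) i) n D)) (iid_list p n)))"
      using True by (simp add: map_bind_pmf pmf.map_comp o_def selp_Suc neg)
    have B: "\<dots> = pair_pmf (iid_list p (Suc (length (filter (Q \<circ> Suc) [0..<n]))))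
                      (iid_list p (length (filter (\<lambda>i. \<not> (Q \<circ> Suc) i) [0..<n])))"
      unfolding IH by (simp add: pair_pmf_def map_pmf_def bind_assoc_pmf bind_return_pmf)
    moreover have "length (filter Q [0..<Suc n]) = Suc (length (filter (Q \<circ> Suc) [0..<n]))"
      using len_filter_Suc[of Q n] True by (simp del: upt_Suc)
    moreover have "length (filter (\<lambda>i. \<not> Q i) [0..<Suc n]) = length (filter (\<lambda>i. \<not> (Q \<circ> Suc) i) [0..<n])"
      using len_filter_Suc[of "\<lambda>i. \<not> Q i" n] True by (simp del: upt_Suc add: o_def)
    ultimately show ?thesis using A by simp
  next
    case False
    have A: "map_pmf (\<lambda>D. (selp Q (Suc n) D, selp (\<lambda>i. \<not> Q i) (Suc n) D)) (iid_list p (Suc n))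
        = bind_pmf p (\<lambda>x. map_pmf (\<lambda>(a, b). (a, x # b))
            (map_pmf (\<lambda>D. (selp (Q \<circ> Suc) n D, selp (\<lambda>i. \<not> (Q \<circ> Suc) i) n D)) (iid_list p n)))"
      using False by (simp add: map_bind_pmf pmf.map_comp o_def selp_Suc neg)
    have B: "\<dots> = pair_pmf (iid_list p (length (filter (Q \<circ> Suc) [0..<n])))
                      (iid_list p (Suc (length (filter (\<lambda>i. \<not> (Q \<circ> Suc) i) [0..<n]))))"
      unfolding IH
      apply (simp add: pair_pmf_def map_pmf_def bind_assoc_pmf bind_return_pmf)
      apply (subst bind_commute_pmf)
      by (rule bind_pmf_cong[OF refl]) simp
    moreover have "length (filter Q [0..<Suc n]) = length (filter (Q \<circ> Suc) [0..<n])"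
      using len_filter_Suc[of Q n] False by (simp del: upt_Suc)
    moreover have "length (filter (\<lambda>i. \<not> Q i) [0..<Suc n]) = Suc (length (filter (\<lambda>i. \<not> (Q \<circ> Suc) i) [0..<n]))"
      using len_filter_Suc[of "\<lambda>i. \<not> Q i" n] False by (simp del: upt_Suc add: o_def)
    ultimately show ?thesis using A by simp
  qed
qed

lemma three_stage:
  fixes X :: "'a pmf" and Y :: "'b pmf" and Z :: "'a \<Rightarrow> 'c pmf"
  defines "W \<equiv> bind_pmf X (\<lambda>x. bind_pmf Y (\<lambda>y. map_pmf (\<lambda>z. (x, y, z)) (Z x)))"
  assumes h1: "measure_pmf.prob X {x. \<not> Q1 x} \<le> e1"
    and h2: "\<And>x. x \<in> set_pmf X \<Longrightarrow> measure_pmf.prob Y {y. \<not> Q2 x y} \<le> e2"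
    and h3: "\<And>x. x \<in> set_pmf X \<Longrightarrow> measure_pmf.prob (Z x) {z. \<not> Q3 x z} \<le> e3"
    and good: "\<And>x y z. x \<in> set_pmf X \<Longrightarrow> y \<in> set_pmf Y \<Longrightarrow> z \<in> set_pmf (Z x) \<Longrightarrow>
                 Q1 x \<Longrightarrow> Q2 x y \<Longrightarrow> Q3 x z \<Longrightarrow> (x, y, z) \<in> Good"
  shows "measure_pmf.prob W Good \<ge> 1 - (e1 + e2 + e3)"
proof -
  let ?B1 = "{(x, y, z). \<not> Q1 x}"
  let ?B2 = "{(x, y, z). \<not> Q2 x y}"
  let ?B3 = "{(x, y, z). \<not> Q3 x z}"
  have sub: "(- Good) \<inter> set_pmf W \<subseteq> ?B1 \<union> ?B2 \<union> ?B3"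
    using good by (auto simp: W_def)
  have "measure_pmf.prob W (- Good) = measure_pmf.prob W ((- Good) \<inter> set_pmf W)"
    by (simp add: measure_Int_set_pmf)
  also have "\<dots> \<le> measure_pmf.prob W (?B1 \<union> ?B2 \<union> ?B3)"
    by (rule measure_pmf.finite_measure_mono[OF sub]) simp
  also have "\<dots> \<le> measure_pmf.prob W ?B1 + measure_pmf.prob W ?B2 + measure_pmf.prob W ?B3"
  proof -
    have "measure_pmf.prob W (?B1 \<union> ?B2 \<union> ?B3) \<le> measure_pmf.prob W (?B1 \<union> ?B2) + measure_pmf.prob W ?B3"
      by (rule measure_Un_le) auto
    moreover have "measure_pmf.prob W (?B1 \<union> ?B2) \<le> measure_pmf.prob W ?B1 + measure_pmf.prob W ?B2"
      by (rule measure_Un_le) auto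
    ultimately show ?thesis by linarith
  qed
  also have "measure_pmf.prob W ?B1 = measure_pmf.prob (map_pmf fst W) {x. \<not> Q1 x}"
    by (auto simp: vimage_def intro!: arg_cong[where f="measure_pmf.prob W"])
  also have "map_pmf fst W = X"
    by (simp add: W_def map_bind_pmf pmf.map_comp o_def map_pmf_const bind_return_pmf')
  also have "measure_pmf.prob W ?B2 = measure_pmf.prob (map_pmf (\<lambda>(x, y, z). (x, y)) W) {(x, y). \<not> Q2 x y}"
    by (auto simp: vimage_def intro!: arg_cong[where f="measure_pmf.prob W"])
  also have "map_pmf (\<lambda>(x, y, z). (x, y)) W = bind_pmf X (\<lambda>x. map_pmf (\<lambda>y. (x, y)) Y)"
    by (simp add: W_def map_bind_pmf pmf.map_comp o_def map_pmf_const) (simp add: map_pmf_def)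
  also have "measure_pmf.prob W ?B3 = measure_pmf.prob (map_pmf (\<lambda>(x, y, z). (x, z)) W) {(x, z). \<not> Q3 x z}"
    by (auto simp: vimage_def intro!: arg_cong[where f="measure_pmf.prob W"])
  also have "map_pmf (\<lambda>(x, y, z). (x, z)) W = bind_pmf X (\<lambda>x. map_pmf (\<lambda>z. (x, z)) (Z x))"
    by (simp add: W_def map_bind_pmf pmf.map_comp o_def)
  finally have "measure_pmf.prob W (- Good) \<le> e1 + e2 + e3"
  proof -
    assume a: "measure_pmf.prob W (- Good)
       \<le> measure_pmf.prob X {x. \<not> Q1 x} +
          measure_pmf.prob (bind_pmf X (\<lambda>x. map_pmf (Pair x) Y)) {(x, y). \<not> Q2 x y} +
          measure_pmf.prob (bind_pmf X (\<lambda>x. map_pmf (Pair x) (Z x))) {(x, z). \<not> Q3 x z}"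
    have b2: "measure_pmf.prob (bind_pmf X (\<lambda>x. map_pmf (Pair x) Y)) {(x, y). \<not> Q2 x y} \<le> e2"
      by (rule prob_bind_le) (use h2 in \<open>simp add: vimage_def\<close>)
    have b3: "measure_pmf.prob (bind_pmf X (\<lambda>x. map_pmf (Pair x) (Z x))) {(x, z). \<not> Q3 x z} \<le> e3"
      by (rule prob_bind_le) (use h3 in \<open>simp add: vimage_def\<close>)
    show ?thesis using a h1 b2 b3 by linarith
  qed
  moreover have "measure_pmf.prob W (- Good) = 1 - measure_pmf.prob W Good"
    using measure_pmf.prob_compl[of Good W] by (simp add: Compl_eq_Diff_UNIV)
  ultimately show ?thesis by linarith
qed

lemma prob_bind_ge:
  assumes "\<And>x. x \<in> set_pmf M \<Longrightarrow> measure_pmf.prob (N x) X \<ge> c"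
  shows "measure_pmf.prob (bind_pmf M N) X \<ge> c"
proof -
  have "measure_pmf.prob (bind_pmf M N) (-X) \<le> 1 - c"
  proof (rule prob_bind_le)
    fix x assume "x \<in> set_pmf M"
    then show "measure_pmf.prob (N x) (-X) \<le> 1 - c"
      using assms measure_pmf.prob_compl[of X "N x"] by (simp add: Compl_eq_Diff_UNIV)
  qed
  then show ?thesis using measure_pmf.prob_compl[of X "bind_pmf M N"] by (simp add: Compl_eq_Diff_UNIV)
qed

lemma pmf_one_return: "pmf p x = 1 \<Longrightarrow> p = return_pmf x"
proof -
  assume a: "pmf p x = 1"
  have "set_pmf p \<subseteq> {x}"
  proof
    fix y assume y: "y \<in> set_pmf p"
    show "y \<in> {x}"
    proof (rule ccontr)
      assume "y \<notin> {x}"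
      then have "measure_pmf.prob p {x, y} = pmf p x + pmf p y"
        by (subst measure_measure_pmf_finite) auto
      moreover have "pmf p y > 0" using y by (simp add: pmf_positive)
      moreover have "measure_pmf.prob p {x, y} \<le> 1" by simp
      ultimately show False using a by simp
    qed
  qed
  then show ?thesis by (simp add: set_pmf_subset_singleton)
qed

lemma traj_from_states:
  assumes mdp: "valid_mdp S A rho P" and pol: "valid_policy S A \<pi>"
  shows "s \<in> S \<Longrightarrow> tr \<in> set_pmf (traj_from P \<pi> j k s) \<Longrightarrow> \<forall>i<k. fst (tr ! i) \<in> S"
proof (induction k arbitrary: j s tr)
  case 0 then show ?case by simp
next
  case (Suc k)
  from Suc.prems obtain a s' rest where a: "a \<in> set_pmf (\<pi> j s)" and s': "s' \<in> set_pmf (P j s a)" and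
    rest: "rest \<in> set_pmf (traj_from P \<pi> (Suc j) k s')" and tr: "tr = (s, a) # rest"
    by auto
  have "a \<in> A" using pol a Suc.prems(1) by (auto simp: valid_policy_def)
  then have "s' \<in> S" using mdp s' Suc.prems(1) unfolding valid_mdp_def by blast
  from Suc.IH[OF this rest] have "\<forall>i<k. fst (rest ! i) \<in> S" .
  then show ?case using tr Suc.prems(1) by (auto simp: less_Suc_eq_0_disj)
qed

lemma traj_support:
  assumes mdp: "valid_mdp S A rho P" and pol: "valid_policy S A \<pi>"
    and tr: "tr \<in> set_pmf (traj_pmf rho P \<pi> H)"
  shows "length tr = H" "\<And>i. i < H \<Longrightarrow> fst (tr ! i) \<in> S"
    "\<And>i. i < H \<Longrightarrow> snd (tr ! i) \<in> set_pmf (\<pi> i (fst (tr ! i)))"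
proof -
  from tr obtain s where s: "s \<in> set_pmf rho" and tr': "tr \<in> set_pmf (traj_from P \<pi> 0 H s)"
    by (auto simp: traj_pmf_def)
  have sS: "s \<in> S" using mdp s by (auto simp: valid_mdp_def)
  show "length tr = H" using traj_from_set[OF tr'] by simp
  show "\<And>i. i < H \<Longrightarrow> snd (tr ! i) \<in> set_pmf (\<pi> i (fst (tr ! i)))" using traj_from_set[OF tr'] by simp
  show "\<And>i. i < H \<Longrightarrow> fst (tr ! i) \<in> S" using traj_from_states[OF mdp pol sS tr'] by simp
qed

lemma det_valid: "(\<forall>h s. s \<in> S \<longrightarrow> piE h s \<in> A) \<Longrightarrow> valid_policy S A (det_policy piE)"
  by (auto simp: valid_policy_def det_policy_def)

lemma sum_fiber:
  assumes "finite S"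
  shows "(\<Sum>s\<in>S. measure_pmf.prob p {x. f x = s \<and> R s x}) = measure_pmf.prob p {x. f x \<in> S \<and> R (f x) x}"
proof -
  have "measure_pmf.prob p (\<Union>s\<in>S. {x. f x = s \<and> R s x}) = (\<Sum>s\<in>S. measure_pmf.prob p {x. f x = s \<and> R s x})"
    by (rule measure_pmf.finite_measure_finite_Union) (auto simp: assms disjoint_family_on_def)
  moreover have "(\<Union>s\<in>S. {x. f x = s \<and> R s x}) = {x. f x \<in> S \<and> R (f x) x}" by auto
  ultimately show ?thesis by simp
qed

lemma amgm:
  fixes n p L lam :: real
  assumes "0 < n" "0 \<le> p" "0 \<le> L" "0 < lam"
  shows "(2 * sqrt (n * p * L) + 2 * L) / n \<le> lam * p + L / (lam * n) + 2 * L / n"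
proof -
  have "2 * sqrt (n * p * L) \<le> lam * (n * p) + L / lam"
  proof -
    define a where "a = sqrt (lam * (n * p))"
    define b where "b = sqrt (L / lam)"
    have "sqrt (n * p * L) = a * b" using assms
      by (simp add: a_def b_def real_sqrt_mult[symmetric] field_simps)
    moreover have "a\<^sup>2 = lam * (n * p)" "b\<^sup>2 = L / lam" using assms by (simp_all add: a_def b_def)
    moreover have "2 * (a * b) \<le> a\<^sup>2 + b\<^sup>2" using sum_squares_bound[of a b] by (simp add: algebra_simps)
    ultimately show ?thesis by simp
  qed
  then have "(2 * sqrt (n * p * L)) / n \<le> (lam * (n * p) + L / lam) / n"
    using assms by (simp add: divide_right_mono)
  also have "\<dots> = lam * p + L / (lam * n)" using assms by (simp add: field_simps)
  finally show ?thesis by (simp add: add_divide_distrib)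
qed

lemma sum_list_ind: "(\<Sum>tr\<leftarrow>xs. if Q tr then 1 else 0) = real (length (filter Q xs))"
  by (induction xs) auto

lemma sel_return: "in_Pi_BC H piE D1 \<pi> \<Longrightarrow> h < H \<Longrightarrow> s \<in> states_at h D1 \<Longrightarrow> \<pi> h s = return_pmf (piE h s)"
  by (auto simp: in_Pi_BC_def intro!: pmf_one_return)

lemma occ_eq: "occ rho P \<pi> H h sa = measure_pmf.prob (traj_pmf rho P \<pi> H) {tr. tr ! h = sa}"
  by (simp add: occ_def pmf_map vimage_def)

lemma coupling_app:
  assumes pi: "in_Pi_BC H piE D1 \<pi>" and h: "h < H"
  shows "measure_pmf.prob (traj_pmf rho P (det_policy piE) H) {tr. tr ! h = sa \<and> in_Tr h D1 tr}
       = measure_pmf.prob (traj_pmf rho P \<pi> H) {tr. tr ! h = sa \<and> in_Tr h D1 tr}"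
proof -
  define G where "G l = (if l < H then states_at l D1 else {})" for l
  have agree: "det_policy piE l t = \<pi> l t" if "t \<in> G l" for l t
    using that sel_return[OF pi, of l t] by (auto simp: G_def det_policy_def split: if_splits)
  have eqmap: "map_pmf (cut G 0 h) (traj_pmf rho P (det_policy piE) H) = map_pmf (cut G 0 h) (traj_pmf rho P \<pi> H)"
    unfolding traj_pmf_def map_bind_pmf
    by (intro bind_pmf_cong refl coupling[OF agree]) (use h in auto)
  have set: "{tr. tr ! h = sa \<and> in_Tr h D1 tr} = cut G 0 h -` {Some sa}"
    using h by (auto simp: cut_def in_Tr_def G_def split: if_splits)
  show ?thesis unfolding set measure_map_pmf[symmetric] eqmap ..
qed

locale mdpctx =
  fixes S :: "nat set" and A :: "nat set" and rho P piE H and sel :: "traj list \<Rightarrow> policy"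
  assumes mdp: "valid_mdp S A rho P" and piA: "\<forall>h s. s \<in> S \<longrightarrow> piE h s \<in> A"
    and selok: "\<forall>D1. valid_policy S A (sel D1) \<and> in_Pi_BC H piE D1 (sel D1)"

context mdpctx
begin

abbreviation "Xp \<equiv> traj_pmf rho P (det_policy piE) H"
abbreviation "Tp D1 \<equiv> traj_pmf rho P (sel D1) H"

lemma ex_act: "tr \<in> set_pmf Xp \<Longrightarrow> h < H \<Longrightarrow> snd (tr ! h) = piE h (fst (tr ! h))"
  using traj_support(3)[OF mdp det_valid[OF piA]] by (simp add: det_policy_def)

lemma ex_states: "tr \<in> set_pmf Xp \<Longrightarrow> h < H \<Longrightarrow> fst (tr ! h) \<in> S"
  using traj_support(2)[OF mdp det_valid[OF piA]] by simp

lemma T_act: "tr \<in> set_pmf (Tp D1) \<Longrightarrow> h < H \<Longrightarrow> in_Tr h D1 tr \<Longrightarrow> snd (tr ! h) = piE h (fst (tr ! h))"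
proof -
  assume tr: "tr \<in> set_pmf (Tp D1)" and h: "h < H" and it: "in_Tr h D1 tr"
  have "fst (tr ! h) \<in> states_at h D1" using it by (simp add: in_Tr_def)
  then have "sel D1 h (fst (tr ! h)) = return_pmf (piE h (fst (tr ! h)))"
    using sel_return selok h by blast
  then show ?thesis using traj_support(3)[OF mdp _ tr h] selok by auto
qed

lemma occ_split:
  assumes "h < H"
  shows "occ rho P (det_policy piE) H h (s, piE h s) =
     measure_pmf.prob (Tp D1) {tr. tr ! h = (s, piE h s) \<and> in_Tr h D1 tr}
   + measure_pmf.prob Xp {tr. tr ! h = (s, piE h s) \<and> \<not> in_Tr h D1 tr}"
proof -
  have "occ rho P (det_policy piE) H h (s, piE h s) = measure_pmf.prob Xp
      ({tr. tr ! h = (s, piE h s) \<and> in_Tr h D1 tr} \<union> {tr. tr ! h = (s, piE h s) \<and> \<not> in_Tr h D1 tr})"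
    unfolding occ_eq by (intro arg_cong[where f="measure_pmf.prob Xp"]) auto
  also have "\<dots> = measure_pmf.prob Xp {tr. tr ! h = (s, piE h s) \<and> in_Tr h D1 tr}
      + measure_pmf.prob Xp {tr. tr ! h = (s, piE h s) \<and> \<not> in_Tr h D1 tr}"
    by (rule measure_pmf.finite_measure_Union) auto
  also have "measure_pmf.prob Xp {tr. tr ! h = (s, piE h s) \<and> in_Tr h D1 tr}
      = measure_pmf.prob (Tp D1) {tr. tr ! h = (s, piE h s) \<and> in_Tr h D1 tr}"
    using coupling_app selok assms by blast
  finally show ?thesis .
qed

lemma occ_zero:
  assumes "h < H" "a \<noteq> piE h s"
  shows "occ rho P (det_policy piE) H h (s, a) = 0"
  unfolding occ_eq measure_pmf_zero_iff using ex_act assms by fastforce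

lemma dt_zero:
  assumes "set D1c \<subseteq> set_pmf Xp" "set Denv \<subseteq> set_pmf (Tp D1)" "h < H" "a \<noteq> piE h s"
  shows "d_tilde m n' D1 D1c Denv h (s, a) = 0"
proof -
  have 1: "filter (\<lambda>tr. tr ! h = (s, a) \<and> in_Tr h D1 tr) Denv = []"
    using T_act[of _ D1 h] assms by (fastforce simp: filter_empty_conv)
  have 2: "filter (\<lambda>tr. tr ! h = (s, a) \<and> \<not> in_Tr h D1 tr) D1c = []"
    using ex_act[of _ h] assms by (fastforce simp: filter_empty_conv)
  show ?thesis unfolding d_tilde_def sum_list_ind 1 2 by simp
qed

end

context mdpctx
begin

lemma finS: "finite S" and finA: "finite A" using mdp by (auto simp: valid_mdp_def)

lemma sum_p1:
  "(\<Sum>s\<in>S. measure_pmf.prob (Tp D1) {tr. tr ! h = (s, piE h s) \<and> in_Tr h D1 tr}) \<le> 1"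
proof -
  have "(\<Sum>s\<in>S. measure_pmf.prob (Tp D1) {tr. tr ! h = (s, piE h s) \<and> in_Tr h D1 tr})
     = (\<Sum>s\<in>S. measure_pmf.prob (Tp D1) {tr. fst (tr ! h) = s \<and> (snd (tr ! h) = piE h s \<and> in_Tr h D1 tr)})"
    by (intro sum.cong refl arg_cong[where f="measure_pmf.prob (Tp D1)"]) (auto simp: prod_eq_iff)
  also have "\<dots> = measure_pmf.prob (Tp D1) {tr. fst (tr ! h) \<in> S \<and> (snd (tr ! h) = piE h (fst (tr ! h)) \<and> in_Tr h D1 tr)}"
    by (rule sum_fiber[OF finS])
  also have "\<dots> \<le> 1" by simp
  finally show ?thesis .
qed

lemma missing_l:
  assumes l: "l < H" and c0: "0 \<le> c" and Q: "\<forall>s\<in>S. s \<notin> states_at l D1 \<longrightarrow> measure_pmf.prob Xp {tr. fst (tr ! l) = s} \<le> c"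
  shows "measure_pmf.prob Xp {tr. fst (tr ! l) \<notin> states_at l D1} \<le> real (card S) * c"
proof -
  have "measure_pmf.prob Xp {tr. fst (tr ! l) \<notin> states_at l D1} = measure_pmf.prob Xp {tr. fst (tr ! l) \<in> S - states_at l D1}"
    by (rule measure_prob_cong_0) (use ex_states[OF _ l] in \<open>auto simp: set_pmf_iff\<close>)
  also have "\<dots> = (\<Sum>s\<in>S - states_at l D1. measure_pmf.prob Xp {tr. fst (tr ! l) = s \<and> True})"
    using sum_fiber[of "S - states_at l D1" Xp "\<lambda>tr. fst (tr ! l)" "\<lambda>_ _. True"] finS by simp
  also have "\<dots> \<le> (\<Sum>s\<in>S - states_at l D1. c)"
    by (rule sum_mono) (use Q in auto)
  also have "\<dots> = real (card (S - states_at l D1)) * c" by simp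
  also have "\<dots> \<le> real (card S) * c"
    using finS c0 by (intro mult_right_mono) (auto intro: card_mono)
  finally show ?thesis .
qed

lemma sum_p2:
  assumes h: "h < H" and c0: "0 \<le> c"
    and Q: "\<forall>l<H. \<forall>s\<in>S. s \<notin> states_at l D1 \<longrightarrow> measure_pmf.prob Xp {tr. fst (tr ! l) = s} \<le> c"
  shows "(\<Sum>s\<in>S. measure_pmf.prob Xp {tr. tr ! h = (s, piE h s) \<and> \<not> in_Tr h D1 tr}) \<le> real H * real (card S) * c"
proof -
  have "(\<Sum>s\<in>S. measure_pmf.prob Xp {tr. tr ! h = (s, piE h s) \<and> \<not> in_Tr h D1 tr})
     = (\<Sum>s\<in>S. measure_pmf.prob Xp {tr. fst (tr ! h) = s \<and> (snd (tr ! h) = piE h s \<and> \<not> in_Tr h D1 tr)})"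
    by (intro sum.cong refl arg_cong[where f="measure_pmf.prob Xp"]) (auto simp: prod_eq_iff)
  also have "\<dots> = measure_pmf.prob Xp {tr. fst (tr ! h) \<in> S \<and> (snd (tr ! h) = piE h (fst (tr ! h)) \<and> \<not> in_Tr h D1 tr)}"
    by (rule sum_fiber[OF finS])
  also have "\<dots> \<le> measure_pmf.prob Xp (\<Union>l\<in>{..h}. {tr. fst (tr ! l) \<notin> states_at l D1})"
    by (rule measure_pmf.finite_measure_mono) (auto simp: in_Tr_def)
  also have "\<dots> \<le> (\<Sum>l\<in>{..h}. measure_pmf.prob Xp {tr. fst (tr ! l) \<notin> states_at l D1})"
    by (rule measure_UNION_le) auto
  also have "\<dots> \<le> (\<Sum>l\<in>{..h}. real (card S) * c)"
    by (rule sum_mono, rule missing_l) (use h c0 Q in auto)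
  also have "\<dots> = real (Suc h) * (real (card S) * c)" by simp
  also have "\<dots> \<le> real H * (real (card S) * c)"
    using h c0 by (intro mult_right_mono) auto
  finally show ?thesis by (simp add: mult.assoc)
qed

end

lemma dev_bound:
  fixes K n p L lam :: real
  assumes "0 < n" "0 \<le> p" "0 \<le> L" "0 < lam"
    and "\<bar>K - n * p\<bar> \<le> 2 * sqrt (n * p * L) + 2 * L"
  shows "\<bar>K / n - p\<bar> \<le> lam * p + L / (lam * n) + 2 * L / n"
proof -
  have "\<bar>K / n - p\<bar> = \<bar>K - n * p\<bar> / n" using assms(1) by (simp add: field_simps abs_div_pos[symmetric])
  also have "\<dots> \<le> (2 * sqrt (n * p * L) + 2 * L) / n" using assms by (simp add: divide_right_mono)
  also have "\<dots> \<le> lam * p + L / (lam * n) + 2 * L / n" by (rule amgm) (use assms in auto)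
  finally show ?thesis .
qed

context mdpctx
begin

lemma per_h:
  assumes h: "h < H"
    and D1c: "set D1c \<subseteq> set_pmf Xp" and Denv: "set Denv \<subseteq> set_pmf (Tp D1)"
    and m: "real m = 2 * real k" and k: "0 < k" and n: "0 < n'" and L: "0 \<le> L"
    and l1: "0 < lam1" and l2: "0 < lam2" and c0: "0 \<le> c"
    and Q1: "\<forall>l<H. \<forall>s\<in>S. s \<notin> states_at l D1 \<longrightarrow> measure_pmf.prob Xp {tr. fst (tr ! l) = s} \<le> c"
    and Q2: "\<forall>s\<in>S. \<bar>real (length (filter (\<lambda>tr. tr ! h = (s, piE h s) \<and> \<not> in_Tr h D1 tr) D1c))
                 - real k * measure_pmf.prob Xp {tr. tr ! h = (s, piE h s) \<and> \<not> in_Tr h D1 tr}\<bar>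
              \<le> 2 * sqrt (real k * measure_pmf.prob Xp {tr. tr ! h = (s, piE h s) \<and> \<not> in_Tr h D1 tr} * L) + 2 * L"
    and Q3: "\<forall>s\<in>S. \<bar>real (length (filter (\<lambda>tr. tr ! h = (s, piE h s) \<and> in_Tr h D1 tr) Denv))
                 - real n' * measure_pmf.prob (Tp D1) {tr. tr ! h = (s, piE h s) \<and> in_Tr h D1 tr}\<bar>
              \<le> 2 * sqrt (real n' * measure_pmf.prob (Tp D1) {tr. tr ! h = (s, piE h s) \<and> in_Tr h D1 tr} * L) + 2 * L"
  shows "(\<Sum>sa\<in>S \<times> A. \<bar>d_tilde m n' D1 D1c Denv h sa - occ rho P (det_policy piE) H h sa\<bar>)
     \<le> lam1 + real (card S) * (L / (lam1 * real n') + 2 * L / real n')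
       + lam2 * (real H * real (card S) * c) + real (card S) * (L / (lam2 * real k) + 2 * L / real k)"
proof -
  define f where "f sa = \<bar>d_tilde m n' D1 D1c Denv h sa - occ rho P (det_policy piE) H h sa\<bar>" for sa
  define p1 where "p1 s = measure_pmf.prob (Tp D1) {tr. tr ! h = (s, piE h s) \<and> in_Tr h D1 tr}" for s
  define p2 where "p2 s = measure_pmf.prob Xp {tr. tr ! h = (s, piE h s) \<and> \<not> in_Tr h D1 tr}" for s
  define K1 where "K1 s = real (length (filter (\<lambda>tr. tr ! h = (s, piE h s) \<and> in_Tr h D1 tr) Denv))" for s
  define K2 where "K2 s = real (length (filter (\<lambda>tr. tr ! h = (s, piE h s) \<and> \<not> in_Tr h D1 tr) D1c))" for s
  have "(\<Sum>sa\<in>S \<times> A. f sa) = (\<Sum>s\<in>S. \<Sum>a\<in>A. f (s, a))"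
    by (simp add: sum.cartesian_product)
  also have "\<dots> = (\<Sum>s\<in>S. f (s, piE h s))"
  proof (rule sum.cong[OF refl])
    fix s assume s: "s \<in> S"
    have "(\<Sum>a\<in>A. f (s, a)) = (\<Sum>a\<in>A. if a = piE h s then f (s, piE h s) else 0)"
      by (rule sum.cong[OF refl]) (use occ_zero dt_zero D1c Denv h in \<open>auto simp: f_def\<close>)
    also have "\<dots> = f (s, piE h s)" using piA s finA by simp
    finally show "(\<Sum>a\<in>A. f (s, a)) = f (s, piE h s)" .
  qed
  also have "\<dots> \<le> (\<Sum>s\<in>S. (lam1 * p1 s + L / (lam1 * real n') + 2 * L / real n')
                           + (lam2 * p2 s + L / (lam2 * real k) + 2 * L / real k))"
  proof (rule sum_mono)
    fix s assume s: "s \<in> S"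
    have dt: "d_tilde m n' D1 D1c Denv h (s, piE h s) = K1 s / real n' + K2 s / real k"
      unfolding d_tilde_def sum_list_ind K1_def K2_def using m k by (simp add: field_simps)
    have oc: "occ rho P (det_policy piE) H h (s, piE h s) = p1 s + p2 s"
      unfolding p1_def p2_def by (rule occ_split[OF h])
    have "f (s, piE h s) \<le> \<bar>K1 s / real n' - p1 s\<bar> + \<bar>K2 s / real k - p2 s\<bar>"
      unfolding f_def dt oc by linarith
    also have "\<bar>K1 s / real n' - p1 s\<bar> \<le> lam1 * p1 s + L / (lam1 * real n') + 2 * L / real n'"
      by (rule dev_bound) (use n L l1 Q3 s in \<open>auto simp: K1_def p1_def\<close>)
    also have "\<bar>K2 s / real k - p2 s\<bar> \<le> lam2 * p2 s + L / (lam2 * real k) + 2 * L / real k"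
      by (rule dev_bound) (use k L l2 Q2 s in \<open>auto simp: K2_def p2_def\<close>)
    finally show "f (s, piE h s) \<le> (lam1 * p1 s + L / (lam1 * real n') + 2 * L / real n')
                           + (lam2 * p2 s + L / (lam2 * real k) + 2 * L / real k)" by simp
  qed
  also have "\<dots> = lam1 * (\<Sum>s\<in>S. p1 s) + real (card S) * (L / (lam1 * real n') + 2 * L / real n')
       + lam2 * (\<Sum>s\<in>S. p2 s) + real (card S) * (L / (lam2 * real k) + 2 * L / real k)"
    by (simp add: sum.distrib sum_distrib_left algebra_simps)
  also have "\<dots> \<le> lam1 * 1 + real (card S) * (L / (lam1 * real n') + 2 * L / real n')
       + lam2 * (real H * real (card S) * c) + real (card S) * (L / (lam2 * real k) + 2 * L / real k)"
  proof -
    have "(\<Sum>s\<in>S. p1 s) \<le> 1" unfolding p1_def by (rule sum_p1)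
    moreover have "(\<Sum>s\<in>S. p2 s) \<le> real H * real (card S) * c" unfolding p2_def by (rule sum_p2[OF h c0 Q1])
    ultimately show ?thesis using l1 l2 by (intro add_mono mult_left_mono order_refl) auto
  qed
  finally show ?thesis by (simp add: f_def)
qed

end

lemma union_dev:
  fixes S :: "'s set"
  assumes L: "0 \<le> L" and fin: "finite S"
  shows "measure_pmf.prob (iid_list p n) {xs. \<not> (\<forall>h<H. \<forall>s\<in>S.
     \<bar>real (length (filter (E h s) xs)) - real n * measure_pmf.prob p {x. E h s x}\<bar>
       \<le> 2 * sqrt (real n * measure_pmf.prob p {x. E h s x} * L) + 2 * L)}
   \<le> real H * real (card S) * (2 * exp (-L))"
proof -
  let ?B = "\<lambda>(h, s). {xs. 2 * sqrt (real n * measure_pmf.prob p {x. E h s x} * L) + 2 * L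
           < \<bar>real (length (filter (E h s) xs)) - real n * measure_pmf.prob p {x. E h s x}\<bar>}"
  have "measure_pmf.prob (iid_list p n) {xs. \<not> (\<forall>h<H. \<forall>s\<in>S.
     \<bar>real (length (filter (E h s) xs)) - real n * measure_pmf.prob p {x. E h s x}\<bar>
       \<le> 2 * sqrt (real n * measure_pmf.prob p {x. E h s x} * L) + 2 * L)}
     \<le> measure_pmf.prob (iid_list p n) (\<Union>hs\<in>{..<H} \<times> S. ?B hs)"
    by (rule measure_pmf.finite_measure_mono) (auto simp: not_le)
  also have "\<dots> \<le> (\<Sum>hs\<in>{..<H} \<times> S. measure_pmf.prob (iid_list p n) (?B hs))"
    by (rule measure_UNION_le) (auto simp: fin)
  also have "\<dots> \<le> (\<Sum>hs\<in>{..<H} \<times> S. 2 * exp (-L))"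
  proof (rule sum_mono)
    fix hs :: "nat \<times> 's" obtain h s where hs: "hs = (h, s)" by (cases hs)
    show "measure_pmf.prob (iid_list p n) (?B hs) \<le> 2 * exp (-L)"
      unfolding hs using iid_dev[OF L, of p n "E h s"] by simp
  qed
  also have "\<dots> = real H * real (card S) * (2 * exp (-L))" by (simp add: card_cartesian_product)
  finally show ?thesis .
qed

context mdpctx
begin

lemma missing_prob:
  assumes k: "0 < k" and L: "0 \<le> L"
  shows "measure_pmf.prob (iid_list Xp k) {D1. \<not> (\<forall>l<H. \<forall>s\<in>S. s \<notin> states_at l D1 \<longrightarrow>
            measure_pmf.prob Xp {tr. fst (tr ! l) = s} \<le> L / real k)}
       \<le> real H * real (card S) * exp (-L)"
proof -
  let ?d = "\<lambda>l s. measure_pmf.prob Xp {tr. fst (tr ! l) = s}"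
  let ?B = "\<lambda>(l, s). {D1. s \<notin> states_at l D1 \<and> L / real k < ?d l s}"
  have "measure_pmf.prob (iid_list Xp k) {D1. \<not> (\<forall>l<H. \<forall>s\<in>S. s \<notin> states_at l D1 \<longrightarrow> ?d l s \<le> L / real k)}
     \<le> measure_pmf.prob (iid_list Xp k) (\<Union>ls\<in>{..<H} \<times> S. ?B ls)"
    by (rule measure_pmf.finite_measure_mono) (auto simp: not_le)
  also have "\<dots> \<le> (\<Sum>ls\<in>{..<H} \<times> S. measure_pmf.prob (iid_list Xp k) (?B ls))"
    by (rule measure_UNION_le) (auto simp: finS)
  also have "\<dots> \<le> (\<Sum>ls\<in>{..<H} \<times> S. exp (-L))"
  proof (rule sum_mono)
    fix ls :: "nat \<times> nat" obtain l s where ls: "ls = (l, s)" by (cases ls)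
    show "measure_pmf.prob (iid_list Xp k) (?B ls) \<le> exp (-L)"
    proof (cases "L / real k < ?d l s")
      case False
      then have "?B ls = {}" by (auto simp: ls)
      then show ?thesis by simp
    next
      case True
      have "?B ls \<subseteq> {D1. \<not> (\<exists>tr\<in>set D1. fst (tr ! l) = s)}"
        by (auto simp: ls states_at_def)
      then have "measure_pmf.prob (iid_list Xp k) (?B ls) \<le> measure_pmf.prob (iid_list Xp k) {D1. \<not> (\<exists>tr\<in>set D1. fst (tr ! l) = s)}"
        by (rule measure_pmf.finite_measure_mono) simp
      also have "\<dots> \<le> exp (- real k * ?d l s)" by (rule iid_none)
      also have "\<dots> \<le> exp (-L)"
      proof -
        have "L < real k * ?d l s" using True k by (simp add: field_simps)
        then show ?thesis by simp
      qed
      finally show ?thesis .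
    qed
  qed
  also have "\<dots> = real H * real (card S) * exp (-L)" by (simp add: card_cartesian_product)
  finally show ?thesis .
qed

end

lemma arith_final:
  fixes H cS L L0 e m n k :: real
  assumes H: "5 \<le> H" and cS: "1 \<le> cS" and e: "0 < e" "e < 1" and L0: "0 < L0"
    and L: "0 \<le> L" "L \<le> 2 * L0" and m: "m = 2 * k" and k: "0 < k" and n: "0 < n"
    and mbig: "m \<ge> 100 * (H * sqrt H * cS / e) * L0"
    and nbig: "n \<ge> 100 * (H\<^sup>2 * cS / e\<^sup>2) * L0"
  shows "H * (e / (8 * H) + cS * (L / (e / (8 * H) * n) + 2 * L / n)
           + 1 / sqrt H * (H * cS * (L / k)) + cS * (L / (1 / sqrt H * k) + 2 * L / k)) \<le> e"
proof -
  have Hp: "0 < H" using H by simp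
  have sH: "0 < sqrt H" "sqrt H * sqrt H = H" using Hp by simp_all
  have sH1: "1 \<le> sqrt H" using H by simp
  have eq: "H * (e / (8 * H) + cS * (L / (e / (8 * H) * n) + 2 * L / n)
           + 1 / sqrt H * (H * cS * (L / k)) + cS * (L / (1 / sqrt H * k) + 2 * L / k))
      = e / 8 + 8 * (H\<^sup>2 * cS * L) / (e * n) + 2 * (H * cS * L) / n
        + 2 * (H * sqrt H * cS * L) / k + 2 * (H * cS * L) / k"
    using Hp sH e k n by (simp add: field_simps power2_eq_square)
  have A: "H\<^sup>2 * cS * L0 \<le> n * e\<^sup>2 / 100"
    using nbig e by (simp add: field_simps)
  have B: "H * sqrt H * cS * L0 \<le> m * e / 100"
    using mbig e by (simp add: field_simps)
  have H2: "0 \<le> H\<^sup>2 * cS" "0 \<le> H * sqrt H * cS" "0 \<le> H * cS" using Hp cS sH by auto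
  have P1: "H\<^sup>2 * cS * L \<le> H\<^sup>2 * cS * (2 * L0)" using mult_left_mono[OF L(2) H2(1)] .
  have P2: "H * sqrt H * cS * L \<le> H * sqrt H * cS * (2 * L0)" using mult_left_mono[OF L(2) H2(2)] .
  have HH: "H * cS \<le> H\<^sup>2 * cS" using H cS by (simp add: power2_eq_square)
  have HcL: "H * cS * L \<le> H\<^sup>2 * cS * L" using mult_right_mono[OF HH L(1)] .
  have HS: "H * cS \<le> H * sqrt H * cS"
    using mult_left_mono[OF sH1 H2(3)] by (simp add: mult_ac)
  have HcL': "H * cS * L \<le> H * sqrt H * cS * L" using mult_right_mono[OF HS L(1)] .
  have ee: "n * e\<^sup>2 \<le> n * e" using e n by (simp add: power2_eq_square mult_left_le)
  have t1: "8 * (H\<^sup>2 * cS * L) / (e * n) \<le> 16 * e / 100"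
  proof -
    have "8 * (H\<^sup>2 * cS * L) \<le> (16 * e / 100) * (e * n)"
      using P1 A by (simp add: power2_eq_square mult_ac)
    then show ?thesis using e n by (simp add: pos_divide_le_eq)
  qed
  have t2: "2 * (H * cS * L) / n \<le> 4 * e / 100"
  proof -
    have "2 * (H * cS * L) \<le> (4 * e / 100) * n" using HcL P1 A ee by (simp add: algebra_simps)
    then show ?thesis using n by (simp add: pos_divide_le_eq)
  qed
  have t3: "2 * (H * sqrt H * cS * L) / k + 2 * (H * cS * L) / k \<le> 16 * e / 100"
  proof -
    have "2 * (H * sqrt H * cS * L) + 2 * (H * cS * L) \<le> (16 * e / 100) * k"
      using HcL' P2 B m by simp
    then have "(2 * (H * sqrt H * cS * L) + 2 * (H * cS * L)) / k \<le> 16 * e / 100"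
      using k by (simp add: pos_divide_le_eq)
    then show ?thesis by (simp add: add_divide_distrib)
  qed
  show ?thesis unfolding eq using t1 t2 t3 e by linarith
qed

context mdpctx
begin

lemma main:
  assumes H5: "H \<ge> 5" and e: "0 < \<epsilon>" "\<epsilon> < 1" and d: "0 < \<delta>" "\<delta> < 1" and ev: "even m"
    and mbig: "real m \<ge> 100 * (real H powr (3/2) * real (card S) / \<epsilon>) * ln (real (card S) * real H / \<delta>)"
    and nbig: "real n' \<ge> 100 * (real H ^ 2 * real (card S) / \<epsilon>\<^sup>2) * ln (real (card S) * real H / \<delta>)"
  shows "measure_pmf.prob (bc_experiment rho P piE H sel m n')
      {(D1, D1c, Denv). (\<Sum>h<H. \<Sum>sa\<in>S \<times> A.
          \<bar>d_tilde m n' D1 D1c Denv h sa - occ rho P (det_policy piE) H h sa\<bar>) \<le> \<epsilon>}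
      \<ge> 1 - \<delta>"
proof -
  define Good where "Good = {(D1, D1c, Denv). (\<Sum>h<H. \<Sum>sa\<in>S \<times> A.
          \<bar>d_tilde m n' D1 D1c Denv h sa - occ rho P (det_policy piE) H h sa\<bar>) \<le> \<epsilon>}"
  define cS where "cS = real (card S)"
  have Sne: "S \<noteq> {}" using mdp by (simp add: valid_mdp_def)
  have cS1: "1 \<le> cS" using finS Sne by (simp add: cS_def Suc_le_eq card_gt_0_iff)
  have Hr: "5 \<le> real H" using H5 by simp
  have Hp: "0 < real H" using Hr by simp
  define L0 where "L0 = ln (cS * real H / \<delta>)"
  have r5: "5 \<le> cS * real H / \<delta>"
  proof -
    have "1 * real H \<le> cS * real H" using mult_right_mono[OF cS1] Hp by simp
    then have "5 \<le> cS * real H" using Hr by linarith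
    also have "\<dots> \<le> cS * real H / \<delta>" using d cS1 Hp by (simp add: le_divide_eq)
    finally show ?thesis .
  qed
  have ln5: "0 < ln (5::real)" by simp
  have L0ge: "ln 5 \<le> L0" unfolding L0_def using r5 by simp
  have L0p: "0 < L0" using ln5 L0ge by linarith
  define L where "L = ln (5 * cS * real H / \<delta>)"
  have LL: "L = ln 5 + L0"
  proof -
    have "5 * cS * real H / \<delta> = 5 * (cS * real H / \<delta>)" by simp
    then have "L = ln (5 * (cS * real H / \<delta>))" unfolding L_def by (simp only:)
    also have "\<dots> = ln 5 + ln (cS * real H / \<delta>)" using cS1 Hp d by (intro ln_mult_pos) auto
    finally show ?thesis unfolding L0_def .
  qed
  have L0le: "0 \<le> L" "L \<le> 2 * L0" using LL L0ge ln5 by linarith+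
  have expL: "exp (-L) = \<delta> / (5 * cS * real H)"
  proof -
    have "exp L = 5 * cS * real H / \<delta>" unfolding L_def using cS1 Hp d by simp
    then show ?thesis by (simp add: exp_minus)
  qed
  have powr: "real H powr (3/2) = real H * sqrt (real H)"
  proof -
    have "real H powr (3/2) = real H powr (1 + 1/2)" by simp
    also have "\<dots> = real H powr 1 * real H powr (1/2)" by (rule powr_add)
    also have "\<dots> = real H * sqrt (real H)" using Hp by (simp add: powr_half_sqrt)
    finally show ?thesis .
  qed
  have mpos: "0 < real m"
  proof -
    have "0 < 100 * (real H powr (3/2) * cS / \<epsilon>) * L0" using Hp cS1 e L0p by simp
    then show ?thesis using mbig by (simp add: cS_def L0_def)
  qed
  have npos: "0 < real n'"
  proof -
    have "0 < 100 * (real H ^ 2 * cS / \<epsilon>\<^sup>2) * L0" using Hp cS1 e L0p by simp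
    then show ?thesis using nbig by (simp add: cS_def L0_def)
  qed
  define k where "k = m div 2"
  have mk: "m = 2 * k" using ev by (simp add: k_def)
  have kpos: "0 < k" using mpos mk by simp
  define \<I> where "\<I> = {I. I \<subseteq> {..<m} \<and> card I = m div 2}"
  have finI: "finite \<I>" unfolding \<I>_def by (rule finite_subset[of _ "Pow {..<m}"]) auto
  have neI: "\<I> \<noteq> {}" unfolding \<I>_def by (intro ex_in_conv[THEN iffD1] exI[of _ "{..<m div 2}"]) auto
  show ?thesis unfolding Good_def[symmetric] bc_experiment_def \<I>_def[symmetric]
    apply (subst bind_commute_pmf)
  proof (rule prob_bind_ge)
    fix I assume "I \<in> set_pmf (pmf_of_set \<I>)"
    then have I: "I \<subseteq> {..<m}" "card I = k" using finI neI by (auto simp: \<I>_def k_def)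
    have len1: "length (filter (\<lambda>i. i \<in> I) [0..<m]) = k"
    proof -
      have "length (filter (\<lambda>i. i \<in> I) [0..<m]) = card ({i. i \<in> I} \<inter> set [0..<m])"
        by (rule distinct_length_filter) simp
      also have "{i. i \<in> I} \<inter> set [0..<m] = I" using I by auto
      finally show ?thesis using I by simp
    qed
    have len2: "length (filter (\<lambda>i. i \<notin> I) [0..<m]) = k"
    proof -
      have "length (filter (\<lambda>i. i \<notin> I) [0..<m]) = card ({i. i \<notin> I} \<inter> set [0..<m])"
        by (rule distinct_length_filter) simp
      also have "{i. i \<notin> I} \<inter> set [0..<m] = {..<m} - I" by auto
      also have "card ({..<m} - I) = m - k" using I by (simp add: card_Diff_subset finite_subset)
      finally show ?thesis using mk by simp
    qed
    have W: "bind_pmf (iid_list Xp m) (\<lambda>D. let D1 = map (\<lambda>i. D ! i) (filter (\<lambda>i. i \<in> I) [0..<m]);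
           D1c = map (\<lambda>i. D ! i) (filter (\<lambda>i. i \<notin> I) [0..<m])
       in map_pmf (\<lambda>Denv. (D1, D1c, Denv)) (iid_list (Tp D1) n'))
      = bind_pmf (iid_list Xp k) (\<lambda>D1. bind_pmf (iid_list Xp k) (\<lambda>D1c. map_pmf (\<lambda>z. (D1, D1c, z)) (iid_list (Tp D1) n')))"
    proof -
      have "bind_pmf (iid_list Xp m) (\<lambda>D. let D1 = map (\<lambda>i. D ! i) (filter (\<lambda>i. i \<in> I) [0..<m]);
           D1c = map (\<lambda>i. D ! i) (filter (\<lambda>i. i \<notin> I) [0..<m])
       in map_pmf (\<lambda>Denv. (D1, D1c, Denv)) (iid_list (Tp D1) n'))
        = bind_pmf (map_pmf (\<lambda>D. (selp (\<lambda>i. i \<in> I) m D, selp (\<lambda>i. \<not> i \<in> I) m D)) (iid_list Xp m))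
            (\<lambda>(D1, D1c). map_pmf (\<lambda>z. (D1, D1c, z)) (iid_list (Tp D1) n'))"
        unfolding bind_map_pmf by (intro bind_pmf_cong refl) (simp only: Let_def selp_def prod.case)
      also have "\<dots> = bind_pmf (pair_pmf (iid_list Xp k) (iid_list Xp k))
            (\<lambda>(D1, D1c). map_pmf (\<lambda>z. (D1, D1c, z)) (iid_list (Tp D1) n'))"
        unfolding split_iid len1 len2 ..
      also have "\<dots> = bind_pmf (iid_list Xp k) (\<lambda>D1. bind_pmf (iid_list Xp k) (\<lambda>D1c. map_pmf (\<lambda>z. (D1, D1c, z)) (iid_list (Tp D1) n')))"
        unfolding pair_pmf_def bind_assoc_pmf bind_return_pmf prod.case ..
      finally show ?thesis .
    qed
    show "1 - \<delta> \<le> measure_pmf.prob (bind_pmf (iid_list Xp m) (\<lambda>D. let D1 = map (\<lambda>i. D ! i) (filter (\<lambda>i. i \<in> I) [0..<m]);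
           D1c = map (\<lambda>i. D ! i) (filter (\<lambda>i. i \<notin> I) [0..<m])
       in map_pmf (\<lambda>Denv. (D1, D1c, Denv)) (iid_list (Tp D1) n'))) Good"
      unfolding W
    proof -
      define Q1 where "Q1 D1 = (\<forall>l<H. \<forall>s\<in>S. s \<notin> states_at l D1 \<longrightarrow>
            measure_pmf.prob Xp {tr. fst (tr ! l) = s} \<le> L / real k)" for D1
      define Q2 where "Q2 D1 D1c = (\<forall>h<H. \<forall>s\<in>S.
          \<bar>real (length (filter (\<lambda>tr. tr ! h = (s, piE h s) \<and> \<not> in_Tr h D1 tr) D1c))
                 - real k * measure_pmf.prob Xp {tr. tr ! h = (s, piE h s) \<and> \<not> in_Tr h D1 tr}\<bar>
              \<le> 2 * sqrt (real k * measure_pmf.prob Xp {tr. tr ! h = (s, piE h s) \<and> \<not> in_Tr h D1 tr} * L) + 2 * L)" for D1 D1c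
      define Q3 where "Q3 D1 Denv = (\<forall>h<H. \<forall>s\<in>S.
          \<bar>real (length (filter (\<lambda>tr. tr ! h = (s, piE h s) \<and> in_Tr h D1 tr) Denv))
                 - real n' * measure_pmf.prob (Tp D1) {tr. tr ! h = (s, piE h s) \<and> in_Tr h D1 tr}\<bar>
              \<le> 2 * sqrt (real n' * measure_pmf.prob (Tp D1) {tr. tr ! h = (s, piE h s) \<and> in_Tr h D1 tr} * L) + 2 * L)" for D1 Denv
      have "1 - (real H * cS * exp (-L) + real H * cS * (2 * exp (-L)) + real H * cS * (2 * exp (-L)))
         \<le> measure_pmf.prob (bind_pmf (iid_list Xp k) (\<lambda>D1. bind_pmf (iid_list Xp k)
                 (\<lambda>D1c. map_pmf (\<lambda>z. (D1, D1c, z)) (iid_list (Tp D1) n')))) Good"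
      proof (rule three_stage[where ?Q1.0=Q1 and ?Q2.0=Q2 and ?Q3.0=Q3])
        show "measure_pmf.prob (iid_list Xp k) {x. \<not> Q1 x} \<le> real H * cS * exp (- L)"
          unfolding Q1_def cS_def by (rule missing_prob[OF kpos L0le(1)])
      next
        fix x
        show "measure_pmf.prob (iid_list Xp k) {y. \<not> Q2 x y} \<le> real H * cS * (2 * exp (- L))"
          unfolding Q2_def cS_def
          using union_dev[OF L0le(1) finS, of Xp k H "\<lambda>h s tr. tr ! h = (s, piE h s) \<and> \<not> in_Tr h x tr"]
          by simp
      next
        fix x
        show "measure_pmf.prob (iid_list (Tp x) n') {z. \<not> Q3 x z} \<le> real H * cS * (2 * exp (- L))"
          unfolding Q3_def cS_def
          using union_dev[OF L0le(1) finS, of "Tp x" n' H "\<lambda>h s tr. tr ! h = (s, piE h s) \<and> in_Tr h x tr"]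
          by simp
      next
        fix x y z
        assume x: "x \<in> set_pmf (iid_list Xp k)" and y: "y \<in> set_pmf (iid_list Xp k)"
          and z: "z \<in> set_pmf (iid_list (Tp x) n')" and q1: "Q1 x" and q2: "Q2 x y" and q3: "Q3 x z"
        have ys: "set y \<subseteq> set_pmf Xp" using y by (auto simp: iid_list_replicate set_replicate_pmf)
        have zs: "set z \<subseteq> set_pmf (Tp x)" using z by (auto simp: iid_list_replicate set_replicate_pmf)
        define B where "B = \<epsilon> / (8 * real H) + real (card S) * (L / (\<epsilon> / (8 * real H) * real n') + 2 * L / real n')
           + 1 / sqrt (real H) * (real H * real (card S) * (L / real k))
           + real (card S) * (L / (1 / sqrt (real H) * real k) + 2 * L / real k)"
        have "(\<Sum>h<H. \<Sum>sa\<in>S \<times> A. \<bar>d_tilde m n' x y z h sa - occ rho P (det_policy piE) H h sa\<bar>)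
            \<le> (\<Sum>h<H. B)"
        proof (rule sum_mono)
          fix h assume h: "h \<in> {..<H}"
          show "(\<Sum>sa\<in>S \<times> A. \<bar>d_tilde m n' x y z h sa - occ rho P (det_policy piE) H h sa\<bar>) \<le> B"
            unfolding B_def
          proof (rule per_h)
            show "h < H" using h by simp
            show "set y \<subseteq> set_pmf Xp" by (rule ys)
            show "set z \<subseteq> set_pmf (Tp x)" by (rule zs)
            show "real m = 2 * real k" using mk by simp
            show "0 < k" by (rule kpos)
            show "0 < n'" using npos by simp
            show "0 \<le> L" by (rule L0le(1))
            show "0 < \<epsilon> / (8 * real H)" using e Hp by simp
            show "0 < 1 / sqrt (real H)" using Hp by simp
            show "0 \<le> L / real k" using L0le(1) by simp
            show "\<forall>l<H. \<forall>s\<in>S. s \<notin> states_at l x \<longrightarrow> measure_pmf.prob Xp {tr. fst (tr ! l) = s} \<le> L / real k"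
              using q1 by (simp add: Q1_def)
            show "\<forall>s\<in>S. \<bar>real (length (filter (\<lambda>tr. tr ! h = (s, piE h s) \<and> \<not> in_Tr h x tr) y))
                 - real k * measure_pmf.prob Xp {tr. tr ! h = (s, piE h s) \<and> \<not> in_Tr h x tr}\<bar>
              \<le> 2 * sqrt (real k * measure_pmf.prob Xp {tr. tr ! h = (s, piE h s) \<and> \<not> in_Tr h x tr} * L) + 2 * L"
              using q2 h by (simp add: Q2_def)
            show "\<forall>s\<in>S. \<bar>real (length (filter (\<lambda>tr. tr ! h = (s, piE h s) \<and> in_Tr h x tr) z))
                 - real n' * measure_pmf.prob (Tp x) {tr. tr ! h = (s, piE h s) \<and> in_Tr h x tr}\<bar>
              \<le> 2 * sqrt (real n' * measure_pmf.prob (Tp x) {tr. tr ! h = (s, piE h s) \<and> in_Tr h x tr} * L) + 2 * L"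
              using q3 h by (simp add: Q3_def)
          qed
        qed
        also have "\<dots> = real H * B" by simp
        also have "\<dots> \<le> \<epsilon>" unfolding B_def cS_def[symmetric]
        proof (rule arith_final)
          show "5 \<le> real H" by (rule Hr)
          show "1 \<le> cS" by (rule cS1)
          show "0 < \<epsilon>" "\<epsilon> < 1" using e by auto
          show "0 < L0" by (rule L0p)
          show "0 \<le> L" "L \<le> 2 * L0" using L0le by auto
          show "real m = 2 * real k" using mk by simp
          show "0 < real k" using kpos by simp
          show "0 < real n'" by (rule npos)
          show "100 * (real H * sqrt (real H) * cS / \<epsilon>) * L0 \<le> real m"
            using mbig by (simp add: powr cS_def L0_def)
          show "100 * ((real H)\<^sup>2 * cS / \<epsilon>\<^sup>2) * L0 \<le> real n'"
            using nbig by (simp add: cS_def L0_def)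
        qed
        finally show "(x, y, z) \<in> Good" unfolding Good_def by simp
      qed
      moreover have "real H * cS * exp (-L) + real H * cS * (2 * exp (-L)) + real H * cS * (2 * exp (-L)) = \<delta>"
        unfolding expL using Hp cS1 by (simp add: field_simps)
      ultimately show "1 - \<delta> \<le> measure_pmf.prob (bind_pmf (iid_list Xp k) (\<lambda>D1. bind_pmf (iid_list Xp k)
                 (\<lambda>D1c. map_pmf (\<lambda>z. (D1, D1c, z)) (iid_list (Tp D1) n')))) Good" by simp
    qed
  qed
qed

end

theorem lemma4:
  shows "\<exists>C::real>0. \<forall>S A rho P piE H sel m n' \<epsilon> \<delta>.
    valid_mdp S A rho P \<and> H \<ge> 5 \<and>
    (\<forall>h s. s \<in> S \<longrightarrow> piE h s \<in> A) \<and>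
    (\<forall>D1. valid_policy S A (sel D1) \<and> in_Pi_BC H piE D1 (sel D1)) \<and>
    0 < \<epsilon> \<and> \<epsilon> < 1 \<and> 0 < \<delta> \<and> \<delta> < 1 \<and> even m \<and>
    real m \<ge> C * (real H powr (3/2) * real (card S) / \<epsilon>) * ln (real (card S) * real H / \<delta>) \<and>
    real n' \<ge> C * (real H ^ 2 * real (card S) / \<epsilon>\<^sup>2) * ln (real (card S) * real H / \<delta>)
    \<longrightarrow>
    measure_pmf.prob (bc_experiment rho P piE H sel m n')
      {(D1, D1c, Denv). (\<Sum>h<H. \<Sum>sa\<in>S \<times> A.
          \<bar>d_tilde m n' D1 D1c Denv h sa - occ rho P (det_policy piE) H h sa\<bar>) \<le> \<epsilon>}
      \<ge> 1 - \<delta>"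
proof (intro exI[of _ "100::real"] conjI allI impI)
  show "(0::real) < 100" by simp
next
  fix S A rho P piE H sel m n' \<epsilon> \<delta>
  assume as: "valid_mdp S A rho P \<and> H \<ge> 5 \<and>
    (\<forall>h s. s \<in> S \<longrightarrow> piE h s \<in> A) \<and>
    (\<forall>D1. valid_policy S A (sel D1) \<and> in_Pi_BC H piE D1 (sel D1)) \<and>
    0 < \<epsilon> \<and> \<epsilon> < 1 \<and> 0 < \<delta> \<and> \<delta> < 1 \<and> even m \<and>
    real m \<ge> 100 * (real H powr (3/2) * real (card S) / \<epsilon>) * ln (real (card S) * real H / \<delta>) \<and>
    real n' \<ge> 100 * (real H ^ 2 * real (card S) / \<epsilon>\<^sup>2) * ln (real (card S) * real H / \<delta>)"
  then interpret mdpctx S A rho P piE H sel by unfold_locales auto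
  show "measure_pmf.prob (bc_experiment rho P piE H sel m n')
      {(D1, D1c, Denv). (\<Sum>h<H. \<Sum>sa\<in>S \<times> A.
          \<bar>d_tilde m n' D1 D1c Denv h sa - occ rho P (det_policy piE) H h sa\<bar>) \<le> \<epsilon>}
      \<ge> 1 - \<delta>"
    using as by (intro main) auto
qed

end
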